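(* Let $X$ and $Y$ be topological vector spaces (over $\mathbb{R}$), let $\theta$ be the origin of $Y$, let $D$ be a nonempty convex compact subset of $X$, and let $K$ be a nonempty set. Let $F: D\times K \rightrightarrows Y$ and $G: D\times D\rightrightarrows Y$ be set-valued mappings satisfying: (i) for each $y\in K$, the set $\{x\in D: \theta\in F(x,y)\}$ is closed in $D$; (ii) $G$ is a KKM-type mapping on $D$; (iii) for each $y\in K$ there exists $z\in D$ such that for all $x\in D$, $\theta\in G(z,x)$ implies $\theta\in F(x,y)$. Then there exists $\bar x\in D$ such that $\theta\in F(\bar x,y)$ for all $y\in K$.
   Context: A set-valued mapping $G: D\times D\rightrightarrows Y$ is called a KKM-type mapping on $D$ if for every finite subset $\{x_1,\dots,x_n\}\subset D$ and every $x\in \operatorname{co}\{x_1,\dots,x_n\}\cap D$ there exists $j\in\{1,\dots,n\}$ such that $\theta\in G(x_j,x)$. Here $\operatorname{co}$ denotes the convex hull. *)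

theory Defs
  imports "HOL-Analysis.Analysis"
begin

class real_tvs = real_vector + topological_space +
  assumes tvs_add_cont:
    "\<And>a b::'a. filterlim (\<lambda>p. fst p + snd p) (nhds (a + b)) (nhds a \<times>\<^sub>F nhds b)"
  and tvs_scaleR_cont:
    "\<And>(c::real) (a::'a). filterlim (\<lambda>p. fst p *\<^sub>R snd p) (nhds (c *\<^sub>R a)) (nhds c \<times>\<^sub>F nhds a)"

definition KKM_type :: "'a::real_vector set \<Rightarrow> ('a \<Rightarrow> 'a \<Rightarrow> 'b::zero set) \<Rightarrow> bool" where
  "KKM_type D G \<longleftrightarrow>
     (\<forall>A. finite A \<and> A \<subseteq> D \<longrightarrow> (\<forall>x \<in> convex hull A \<inter> D. \<exists>a\<in>A. 0 \<in> G a x))"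

end

theory Submission
  imports Defs "HOL-Analysis.Analysis"
begin

lemma bw_nat:
  fixes X :: "nat \<Rightarrow> nat \<Rightarrow> real"
  assumes "\<And>k j. \<bar>X k j\<bar> \<le> B"
  shows "\<exists>\<sigma> L. strict_mono \<sigma> \<and> (\<forall>j<n. (\<lambda>k. X (\<sigma> k) j) \<longlonglongrightarrow> L j)"
proof (induction n)
  case 0 show ?case by (rule exI[of _ id]) (auto simp: strict_mono_def)
next
  case (Suc n)
  then obtain \<sigma> L where \<sigma>: "strict_mono \<sigma>" and L: "\<forall>j<n. (\<lambda>k. X (\<sigma> k) j) \<longlonglongrightarrow> L j" by blast
  have "bounded (range (\<lambda>k. X (\<sigma> k) n))" using assms unfolding bounded_iff by auto
  then obtain l \<tau> where \<tau>: "strict_mono \<tau>" and l: "((\<lambda>k. X (\<sigma> k) n) \<circ> \<tau>) \<longlonglongrightarrow> l"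
    using bounded_imp_convergent_subsequence by blast
  show ?case
  proof (intro exI conjI allI impI)
    show "strict_mono (\<sigma> \<circ> \<tau>)" using \<sigma> \<tau> strict_mono_o by blast
    fix j assume "j < Suc n"
    show "(\<lambda>k. X ((\<sigma>\<circ>\<tau>) k) j) \<longlonglongrightarrow> (L(n:=l)) j"
    proof (cases "j = n")
      case True then show ?thesis using l by (simp add: o_def)
    next
      case False then have "j<n" using \<open>j<Suc n\<close> by simp
      then have "(\<lambda>k. X (\<sigma> k) j) \<longlonglongrightarrow> L j" using L by simp
      from LIMSEQ_subseq_LIMSEQ[OF this \<tau>] show ?thesis using False by (simp add: o_def)
    qed
  qed
qed

lemma PM:
  fixes n :: nat and A B :: "nat \<Rightarrow> (nat \<Rightarrow> real) set" and Q :: "(nat \<Rightarrow> real) set"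
  defines "Q \<equiv> {x. (\<forall>i<n. 0 \<le> x i \<and> x i \<le> 1) \<and> (\<forall>i. n \<le> i \<longrightarrow> x i = 0)}"
  assumes cover: "\<And>i x. i<n \<Longrightarrow> x\<in>Q \<Longrightarrow> x \<in> A i \<or> x \<in> B i"
    and A0: "\<And>i x. i<n \<Longrightarrow> x\<in>Q \<Longrightarrow> x i = 0 \<Longrightarrow> x \<in> A i"
    and B1: "\<And>i x. i<n \<Longrightarrow> x\<in>Q \<Longrightarrow> x i = 1 \<Longrightarrow> x \<in> B i"
    and clA: "\<And>i X L. i<n \<Longrightarrow> (\<And>k. X k \<in> Q \<inter> A i) \<Longrightarrow> (\<And>j. j<n \<Longrightarrow> (\<lambda>k. X k j) \<longlonglongrightarrow> L j) \<Longrightarrow> L \<in> Q \<Longrightarrow> L \<in> A i"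
    and clB: "\<And>i X L. i<n \<Longrightarrow> (\<And>k. X k \<in> Q \<inter> B i) \<Longrightarrow> (\<And>j. j<n \<Longrightarrow> (\<lambda>k. X k j) \<longlonglongrightarrow> L j) \<Longrightarrow> L \<in> Q \<Longrightarrow> L \<in> B i"
  shows "\<exists>x\<in>Q. \<forall>i<n. x \<in> A i \<and> x \<in> B i"
proof -
  define grid where "grid p y = (\<lambda>i. if i<n then real (y i)/real p else 0)" for p::nat and y::"nat\<Rightarrow>nat"
  have step: "\<exists>q::nat\<Rightarrow>nat. (\<forall>i<n. q i < p) \<and> (\<forall>i<n. \<exists>a b. a\<in>Q\<inter>A i \<and> b\<in>Q\<inter>B i \<and>
      (\<forall>j<n. \<bar>a j - grid p q j\<bar> \<le> inverse (real p) \<and> \<bar>b j - grid p q j\<bar> \<le> inverse (real p)))"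
    if p0: "0<p" for p
  proof -
    define label where "label y i = (if y i = 0 then 0 else if y i = p then 1 else if grid p y \<in> A i then 0 else (1::nat))" for y i
    obtain q where q1: "\<forall>i<n. q i < p" and q2: "\<forall>i<n. \<exists>r s. (\<forall>j<n. q j \<le> r j \<and> r j \<le> q j + 1) \<and> (\<forall>j<n. q j \<le> s j \<and> s j \<le> q j + 1) \<and> label r i \<noteq> label s i"
    proof (rule kuhn_lemma[of p n label])
      show "0 < p" by (fact p0)
      show "\<forall>x. (\<forall>i<n. x i \<le> p) \<longrightarrow> (\<forall>i<n. label x i = 0 \<or> label x i = 1)"
        by (auto simp: label_def)
      show "\<forall>x. (\<forall>i<n. x i \<le> p) \<longrightarrow> (\<forall>i<n. x i = 0 \<longrightarrow> label x i = 0)"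
        by (auto simp: label_def)
      show "\<forall>x. (\<forall>i<n. x i \<le> p) \<longrightarrow> (\<forall>i<n. x i = p \<longrightarrow> label x i = 1)"
        using p0 by (auto simp: label_def)
    qed blast
    have inQ: "grid p r \<in> Q" if "\<forall>j<n. r j \<le> p" for r
      using p0 that by (auto simp: Q_def grid_def)
    have lab0: "grid p r \<in> A i" if r: "\<forall>j<n. r j \<le> p" and i: "i<n" and l: "label r i = 0" for r i
    proof (cases "r i = 0")
      case True
      then show ?thesis using A0[OF i inQ[OF r]] i by (simp add: grid_def)
    next
      case False
      then show ?thesis using l p0 by (auto simp: label_def split: if_splits)
    qed
    have lab1: "grid p r \<in> B i" if r: "\<forall>j<n. r j \<le> p" and i: "i<n" and l: "label r i \<noteq> 0" for r i
    proof (cases "r i = p")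
      case True
      then show ?thesis using B1[OF i inQ[OF r]] i p0 by (simp add: grid_def)
    next
      case False
      then have "grid p r \<notin> A i" using l by (auto simp: label_def split: if_splits)
      then show ?thesis using cover[OF i inQ[OF r]] by blast
    qed
    have close: "\<bar>grid p r j - grid p q j\<bar> \<le> inverse (real p)" if "\<forall>j<n. q j \<le> r j \<and> r j \<le> q j + 1" "j<n" for r j
    proof -
      have "grid p r j - grid p q j = (real (r j) - real (q j)) / real p" using \<open>j<n\<close> by (simp add: grid_def diff_divide_distrib)
      moreover have d: "0 \<le> real (r j) - real (q j)" "real (r j) - real (q j) \<le> 1" using that by auto
      ultimately have "\<bar>grid p r j - grid p q j\<bar> = (real (r j) - real (q j)) / real p" by simp
      also have "\<dots> \<le> 1 / real p" using d p0 by (intro divide_right_mono) auto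
      finally show ?thesis by (simp add: inverse_eq_divide)
    qed
    have "\<forall>i<n. \<exists>a b. a\<in>Q\<inter>A i \<and> b\<in>Q\<inter>B i \<and>
      (\<forall>j<n. \<bar>a j - grid p q j\<bar> \<le> inverse (real p) \<and> \<bar>b j - grid p q j\<bar> \<le> inverse (real p))"
    proof (intro allI impI)
      fix i assume i: "i<n"
      then obtain r s where rs: "\<forall>j<n. q j \<le> r j \<and> r j \<le> q j + 1" "\<forall>j<n. q j \<le> s j \<and> s j \<le> q j + 1" "label r i \<noteq> label s i"
        using q2 by blast
      have rp: "\<forall>j<n. r j \<le> p" "\<forall>j<n. s j \<le> p" using rs(1,2) q1 by (auto simp: Suc_le_eq) (meson Suc_leI le_trans)+
      show "\<exists>a b. a\<in>Q\<inter>A i \<and> b\<in>Q\<inter>B i \<and>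
        (\<forall>j<n. \<bar>a j - grid p q j\<bar> \<le> inverse (real p) \<and> \<bar>b j - grid p q j\<bar> \<le> inverse (real p))"
      proof (cases "label r i = 0")
        case True
        then have "label s i \<noteq> 0" using rs(3) by simp
        then show ?thesis using True lab0[OF rp(1) i] lab1[OF rp(2) i] inQ[OF rp(1)] inQ[OF rp(2)] close[OF rs(1)] close[OF rs(2)]
          by blast
      next
        case False
        then have "label s i = 0" using rs(3) by (simp add: label_def split: if_splits)
        then show ?thesis using False lab0[OF rp(2) i] lab1[OF rp(1) i] inQ[OF rp(1)] inQ[OF rp(2)] close[OF rs(1)] close[OF rs(2)]
          by blast
      qed
    qed
    then show ?thesis using q1 by blast
  qed
  have "\<forall>k. \<exists>q. (\<forall>i<n. q i < Suc k) \<and> (\<forall>i<n. \<exists>a b. a\<in>Q\<inter>A i \<and> b\<in>Q\<inter>B i \<and>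
      (\<forall>j<n. \<bar>a j - grid (Suc k) q j\<bar> \<le> inverse (real (Suc k)) \<and> \<bar>b j - grid (Suc k) q j\<bar> \<le> inverse (real (Suc k))))"
    using step by blast
  then obtain qq where qq1: "\<And>k i. i<n \<Longrightarrow> qq k i < Suc k"
    and qq2: "\<And>k i. i<n \<Longrightarrow> \<exists>a b. a\<in>Q\<inter>A i \<and> b\<in>Q\<inter>B i \<and>
      (\<forall>j<n. \<bar>a j - grid (Suc k) (qq k) j\<bar> \<le> inverse (real (Suc k)) \<and> \<bar>b j - grid (Suc k) (qq k) j\<bar> \<le> inverse (real (Suc k)))"
    by metis
  then obtain a b where ab: "\<And>k i. i<n \<Longrightarrow> a k i\<in>Q\<inter>A i \<and> b k i\<in>Q\<inter>B i \<and>
      (\<forall>j<n. \<bar>a k i j - grid (Suc k) (qq k) j\<bar> \<le> inverse (real (Suc k)) \<and> \<bar>b k i j - grid (Suc k) (qq k) j\<bar> \<le> inverse (real (Suc k)))"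
  proof -
    have "\<forall>ki. \<exists>ab. snd ki < n \<longrightarrow> fst ab \<in>Q\<inter>A (snd ki) \<and> snd ab\<in>Q\<inter>B (snd ki) \<and>
      (\<forall>j<n. \<bar>fst ab j - grid (Suc (fst ki)) (qq (fst ki)) j\<bar> \<le> inverse (real (Suc (fst ki))) \<and> \<bar>snd ab j - grid (Suc (fst ki)) (qq (fst ki)) j\<bar> \<le> inverse (real (Suc (fst ki))))"
      using qq2 by fastforce
    then obtain f where f: "\<And>ki. snd ki < n \<Longrightarrow> fst (f ki) \<in>Q\<inter>A (snd ki) \<and> snd (f ki)\<in>Q\<inter>B (snd ki) \<and>
      (\<forall>j<n. \<bar>fst (f ki) j - grid (Suc (fst ki)) (qq (fst ki)) j\<bar> \<le> inverse (real (Suc (fst ki))) \<and> \<bar>snd (f ki) j - grid (Suc (fst ki)) (qq (fst ki)) j\<bar> \<le> inverse (real (Suc (fst ki))))"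
      by metis
    show ?thesis
      by (rule that[of "\<lambda>k i. fst (f (k,i))" "\<lambda>k i. snd (f (k,i))"]) (use f in force)
  qed
  define Y where "Y k = grid (Suc k) (qq k)" for k
  have Ybd: "0 \<le> Y k j \<and> Y k j \<le> 1" for k j
    using qq1[of j k] by (auto simp: Y_def grid_def)
  have "\<bar>Y k j\<bar> \<le> 1" for k j using Ybd[of k j] by (simp add: abs_if)
  then obtain \<sigma> L where \<sigma>: "strict_mono \<sigma>" and L: "\<forall>j<n. (\<lambda>k. Y (\<sigma> k) j) \<longlonglongrightarrow> L j"
    using bw_nat by blast
  define L' where "L' j = (if j<n then L j else 0)" for j
  have L'Q: "L' \<in> Q"
  proof -
    have "0 \<le> L j \<and> L j \<le> 1" if "j<n" for j
      using L that Ybd by (meson LIMSEQ_le_const LIMSEQ_le_const2)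
    then show ?thesis by (auto simp: Q_def L'_def)
  qed
  have inv0: "(\<lambda>k. inverse (real (Suc (\<sigma> k)))) \<longlonglongrightarrow> 0"
    using LIMSEQ_subseq_LIMSEQ[OF LIMSEQ_inverse_real_of_nat \<sigma>] by (simp add: o_def)
  have conv: "(\<lambda>k. Z (\<sigma> k) j) \<longlonglongrightarrow> L' j"
    if j: "j<n" and Z: "\<And>k. \<bar>Z k j - Y k j\<bar> \<le> inverse (real (Suc k))" for Z :: "nat \<Rightarrow> nat \<Rightarrow> real" and j
  proof -
    have "(\<lambda>k. Z (\<sigma> k) j - Y (\<sigma> k) j) \<longlonglongrightarrow> 0"
      by (rule Lim_null_comparison[OF _ inv0]) (use Z in auto)
    moreover have "(\<lambda>k. Y (\<sigma> k) j) \<longlonglongrightarrow> L' j" using L j by (simp add: L'_def)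
    ultimately have "(\<lambda>k. (Z (\<sigma> k) j - Y (\<sigma> k) j) + Y (\<sigma> k) j) \<longlonglongrightarrow> 0 + L' j" by (rule tendsto_add)
    then show ?thesis by simp
  qed
  show ?thesis
  proof (intro bexI[OF _ L'Q] allI impI conjI)
    fix i assume i: "i<n"
    show "L' \<in> A i"
    proof (rule clA[OF i _ _ L'Q])
      show "a (\<sigma> k) i \<in> Q \<inter> A i" for k using ab[OF i] by blast
      show "(\<lambda>k. a (\<sigma> k) i j) \<longlonglongrightarrow> L' j" if "j<n" for j
        using conv[OF that, of "\<lambda>k j. a k i j"] ab[OF i] that by (auto simp: Y_def)
    qed
    show "L' \<in> B i"
    proof (rule clB[OF i _ _ L'Q])
      show "b (\<sigma> k) i \<in> Q \<inter> B i" for k using ab[OF i] by blast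
      show "(\<lambda>k. b (\<sigma> k) i j) \<longlonglongrightarrow> L' j" if "j<n" for j
        using conv[OF that, of "\<lambda>k j. b k i j"] ab[OF i] that by (auto simp: Y_def)
    qed
  qed
qed


lemma KKM_nat:
  fixes n :: nat and C :: "nat \<Rightarrow> (nat \<Rightarrow> real) set" and \<Delta> :: "(nat \<Rightarrow> real) set"
  defines "\<Delta> \<equiv> {l. (\<forall>j\<le>n. 0 \<le> l j) \<and> (\<forall>j. n < j \<longrightarrow> l j = 0) \<and> sum l {..n} = 1}"
  assumes cl: "\<And>j X L. j \<le> n \<Longrightarrow> (\<And>k. X k \<in> \<Delta> \<inter> C j) \<Longrightarrow> (\<And>i. i \<le> n \<Longrightarrow> (\<lambda>k. X k i) \<longlonglongrightarrow> L i) \<Longrightarrow> L \<in> \<Delta> \<Longrightarrow> L \<in> C j"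
    and kkm: "\<And>l. l \<in> \<Delta> \<Longrightarrow> \<exists>j\<le>n. 0 < l j \<and> l \<in> C j"
  shows "\<exists>l\<in>\<Delta>. \<forall>j\<le>n. l \<in> C j"
proof (rule ccontr)
  assume H: "\<not> (\<exists>l\<in>\<Delta>. \<forall>j\<le>n. l \<in> C j)"
  define dd where "dd l c = (\<Sum>i\<le>n. \<bar>l i - c i\<bar>)" for l c :: "nat \<Rightarrow> real"
  have dd_nonneg: "0 \<le> dd l c" for l c unfolding dd_def by (intro sum_nonneg) auto
  have dd_self: "dd l l = 0" for l unfolding dd_def by simp
  have dd_sym: "dd l c = dd c l" for l c unfolding dd_def by (simp add: abs_minus_commute)
  have dd_tri: "dd l c \<le> dd l m + dd m c" for l m c
    unfolding dd_def sum.distrib[symmetric] by (intro sum_mono) linarith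
  have dd_coord: "\<bar>l i - c i\<bar> \<le> dd l c" if "i \<le> n" for l c i
    unfolding dd_def using that by (intro member_le_sum) auto
  define \<beta> where "\<beta> j l = (if \<Delta> \<inter> C j = {} then 1 else Inf ((\<lambda>c. dd l c) ` (\<Delta> \<inter> C j)))" for j l
  have bdd: "bdd_below ((\<lambda>c. dd l c) ` T)" for l T
    using dd_nonneg by (intro bdd_belowI[of _ 0]) auto
  have b_nonneg: "0 \<le> \<beta> j l" for j l
    unfolding \<beta>_def using dd_nonneg by (auto intro!: cInf_greatest)
  have b_zero: "\<beta> j l = 0" if "l \<in> \<Delta> \<inter> C j" for j l
  proof -
    have "\<beta> j l \<le> dd l l" using that unfolding \<beta>_def by (auto intro!: cInf_lower bdd)
    then show ?thesis using b_nonneg[of j l] dd_self[of l] by simp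
  qed
  have b_lip1: "\<beta> j l \<le> \<beta> j m + dd l m" for j l m
  proof (cases "\<Delta> \<inter> C j = {}")
    case True then show ?thesis using dd_nonneg by (simp add: \<beta>_def)
  next
    case False
    have "\<beta> j l - dd l m \<le> Inf ((\<lambda>c. dd m c) ` (\<Delta> \<inter> C j))"
    proof (rule cInf_greatest)
      show "(\<lambda>c. dd m c) ` (\<Delta> \<inter> C j) \<noteq> {}" using False by simp
      fix y assume "y \<in> (\<lambda>c. dd m c) ` (\<Delta> \<inter> C j)"
      then obtain c where c: "c \<in> \<Delta> \<inter> C j" "y = dd m c" by blast
      have "\<beta> j l \<le> dd l c" using c False unfolding \<beta>_def by (auto intro!: cInf_lower bdd)
      then show "\<beta> j l - dd l m \<le> y" using c dd_tri[of l c m] by simp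
    qed
    then show ?thesis using False by (simp add: \<beta>_def)
  qed
  have b_lip: "\<bar>\<beta> j l - \<beta> j m\<bar> \<le> dd l m" for j l m
    using b_lip1[of j l m] b_lip1[of j m l] dd_sym[of l m] by linarith
  have b_pos: "0 < \<beta> j l" if l: "l \<in> \<Delta>" and j: "j \<le> n" and nC: "l \<notin> C j" for j l
  proof (cases "\<Delta> \<inter> C j = {}")
    case True then show ?thesis by (simp add: \<beta>_def)
  next
    case False
    show ?thesis
    proof (rule ccontr)
      assume "\<not> 0 < \<beta> j l"
      then have b0: "\<beta> j l = 0" using b_nonneg[of j l] by simp
      have "\<exists>c. c \<in> \<Delta> \<inter> C j \<and> dd l c < inverse (real (Suc k))" for k
      proof -
        have "Inf ((\<lambda>c. dd l c) ` (\<Delta> \<inter> C j)) < inverse (real (Suc k))"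
          using b0 False by (simp add: \<beta>_def)
        then show ?thesis using False by (subst (asm) cInf_less_iff) (auto intro: bdd)
      qed
      then obtain c where c: "\<And>k. c k \<in> \<Delta> \<inter> C j \<and> dd l (c k) < inverse (real (Suc k))" by metis
      have "l \<in> C j"
      proof (rule cl[OF j _ _ l])
        show "c k \<in> \<Delta> \<inter> C j" for k using c by blast
        fix i assume i: "i \<le> n"
        have "(\<lambda>k. c k i - l i) \<longlonglongrightarrow> 0"
        proof (rule Lim_null_comparison[OF _ LIMSEQ_inverse_real_of_nat])
          show "\<forall>\<^sub>F k in sequentially. norm (c k i - l i) \<le> inverse (real (Suc k))"
          proof (intro always_eventually allI)
            fix k
            have "\<bar>c k i - l i\<bar> = \<bar>l i - c k i\<bar>" by (simp add: abs_minus_commute)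
            also have "\<dots> \<le> dd l (c k)" by (rule dd_coord[OF i])
            also have "\<dots> \<le> inverse (real (Suc k))" using c[of k] by simp
            finally show "norm (c k i - l i) \<le> inverse (real (Suc k))" by simp
          qed
        qed
        then have "(\<lambda>k. (c k i - l i) + l i) \<longlonglongrightarrow> 0 + l i" by (intro tendsto_add) auto
        then show "(\<lambda>k. c k i) \<longlonglongrightarrow> l i" by simp
      qed
      then show False using nC by simp
    qed
  qed
  have b_cont: "(\<lambda>k. \<beta> j (X k)) \<longlonglongrightarrow> \<beta> j L" if "\<And>i. i \<le> n \<Longrightarrow> (\<lambda>k. X k i) \<longlonglongrightarrow> L i" for j X L
  proof -
    have "(\<lambda>k. dd (X k) L) \<longlonglongrightarrow> (\<Sum>i\<le>n. \<bar>L i - L i\<bar>)"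
      unfolding dd_def by (intro tendsto_intros that) auto
    then have d0: "(\<lambda>k. dd (X k) L) \<longlonglongrightarrow> 0" by simp
    have "(\<lambda>k. \<beta> j (X k) - \<beta> j L) \<longlonglongrightarrow> 0"
    proof (rule Lim_null_comparison[OF _ d0])
      show "\<forall>\<^sub>F k in sequentially. norm (\<beta> j (X k) - \<beta> j L) \<le> dd (X k) L"
        using b_lip by (intro always_eventually allI) simp
    qed
    then have "(\<lambda>k. (\<beta> j (X k) - \<beta> j L) + \<beta> j L) \<longlonglongrightarrow> 0 + \<beta> j L" by (intro tendsto_add) auto
    then show ?thesis by simp
  qed
  define S where "S l = (\<Sum>j\<le>n. \<beta> j l)" for l
  have S_pos: "0 < S l" if "l \<in> \<Delta>" for l
  proof -
    have "\<not> (\<forall>j\<le>n. l \<in> C j)" using H that by (simp add: Bex_def) 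
    then obtain j where j: "j \<le> n" "l \<notin> C j" by auto
    show ?thesis unfolding S_def
    proof (rule sum_pos2[of _ j])
      show "finite {..n}" by simp
      show "j \<in> {..n}" using j by simp
      show "0 < \<beta> j l" using b_pos[OF that j(1) j(2)] .
      show "\<And>i. i \<in> {..n} \<Longrightarrow> 0 \<le> \<beta> i l" using b_nonneg by blast
    qed
  qed
  have b_le_S: "\<beta> j l \<le> S l" if "j \<le> n" for j l
    unfolding S_def using that b_nonneg by (intro member_le_sum) auto
  have S_cont: "(\<lambda>k. S (X k)) \<longlonglongrightarrow> S L" if "\<And>i. i \<le> n \<Longrightarrow> (\<lambda>k. X k i) \<longlonglongrightarrow> L i" for X L
    unfolding S_def by (intro tendsto_sum b_cont that)
  define Q where "Q = {x::nat\<Rightarrow>real. (\<forall>i<n. 0 \<le> x i \<and> x i \<le> 1) \<and> (\<forall>i. n \<le> i \<longrightarrow> x i = 0)}"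
  define m where "m x = max 1 (\<Sum>i<n. x i)" for x :: "nat \<Rightarrow> real"
  define h where "h x = (\<lambda>j. if j < n then x j / m x else if j = n then 1 - (\<Sum>i<n. x i) / m x else 0)" for x
  have m1: "1 \<le> m x" for x by (simp add: m_def)
  have sum_le_m: "(\<Sum>i<n. x i) / m x \<le> 1" for x
    using m1[of x] by (simp add: m_def divide_le_eq)
  have h_in: "h x \<in> \<Delta>" if x: "x \<in> Q" for x
  proof -
    have "0 \<le> h x j" if "j \<le> n" for j
      using x m1[of x] sum_le_m[of x] that by (auto simp: h_def Q_def)
    moreover have "h x j = 0" if "n < j" for j using that by (simp add: h_def)
    moreover have "sum (h x) {..n} = 1"
    proof -
      have "sum (h x) {..n} = sum (h x) {..<n} + h x n"
        by (simp add: lessThan_Suc_atMost[symmetric])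
      also have "sum (h x) {..<n} = (\<Sum>i<n. x i / m x)" by (intro sum.cong) (auto simp: h_def)
      also have "\<dots> = (\<Sum>i<n. x i) / m x" by (simp add: sum_divide_distrib)
      finally show ?thesis by (simp add: h_def)
    qed
    ultimately show ?thesis by (simp add: \<Delta>_def)
  qed
  have h_cont: "(\<lambda>k. h (X k) i) \<longlonglongrightarrow> h L i" if XL: "\<And>i. i < n \<Longrightarrow> (\<lambda>k. X k i) \<longlonglongrightarrow> L i" for X L i
  proof -
    have sc: "(\<lambda>k. \<Sum>i<n. X k i) \<longlonglongrightarrow> (\<Sum>i<n. L i)" by (intro tendsto_sum XL) auto
    have mc: "(\<lambda>k. m (X k)) \<longlonglongrightarrow> m L" unfolding m_def by (intro tendsto_max tendsto_const sc)
    have mL: "m L \<noteq> 0" using m1[of L] by simp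
    show ?thesis
    proof (cases "i < n")
      case True then show ?thesis unfolding h_def using XL[OF True] by (simp add: tendsto_divide[OF _ mc mL])
    next
      case False
      then show ?thesis unfolding h_def using tendsto_diff[OF tendsto_const tendsto_divide[OF sc mc mL], of 1] by simp
    qed
  qed
  define g where "g x = (\<lambda>i. if i < n then \<beta> i (h x) / S (h x) else 0)" for x
  have g_cont: "(\<lambda>k. g (X k) i) \<longlonglongrightarrow> g L i" if XL: "\<And>i. i < n \<Longrightarrow> (\<lambda>k. X k i) \<longlonglongrightarrow> L i" and L: "L \<in> Q" for X L i
  proof -
    have hc: "\<And>i. i \<le> n \<Longrightarrow> (\<lambda>k. h (X k) i) \<longlonglongrightarrow> h L i" using h_cont[of X L] XL by blast
    have SL: "S (h L) \<noteq> 0" using S_pos[OF h_in[OF L]] by simp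
    show ?thesis unfolding g_def using tendsto_divide[OF b_cont[OF hc] S_cont[OF hc] SL] by simp
  qed
  have g_nonneg: "0 \<le> g x i" if "x \<in> Q" for x i
    using b_nonneg S_pos[OF h_in[OF that]] by (simp add: g_def)
  have g_le1: "g x i \<le> 1" if "x \<in> Q" for x i
    using b_le_S[of i] S_pos[OF h_in[OF that]] by (simp add: g_def divide_le_eq)
  obtain x where xQ: "x \<in> Q" and fxp: "\<And>i. i < n \<Longrightarrow> x i \<le> g x i \<and> g x i \<le> x i"
  proof -
    have "\<exists>x\<in>Q. \<forall>i<n. x \<in> {x. x i \<le> g x i} \<and> x \<in> {x. g x i \<le> x i}"
      unfolding Q_def
    proof (rule PM)
      fix i and x :: "nat \<Rightarrow> real" assume "i < n" and xq: "x \<in> {x. (\<forall>i<n. 0 \<le> x i \<and> x i \<le> 1) \<and> (\<forall>i. n \<le> i \<longrightarrow> x i = 0)}"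
      then have xq': "x \<in> Q" by (simp add: Q_def)
      show "x \<in> {x. x i \<le> g x i} \<or> x \<in> {x. g x i \<le> x i}" by auto
      show "x \<in> {x. x i \<le> g x i}" if "x i = 0" using that g_nonneg[OF xq'] by simp
      show "x \<in> {x. g x i \<le> x i}" if "x i = 1" using that g_le1[OF xq'] by simp
    next
      fix i and X :: "nat \<Rightarrow> nat \<Rightarrow> real" and L :: "nat \<Rightarrow> real" assume i: "i < n"
        and X: "\<And>k. X k \<in> {x. (\<forall>i<n. 0 \<le> x i \<and> x i \<le> 1) \<and> (\<forall>i. n \<le> i \<longrightarrow> x i = 0)} \<inter> {x. x i \<le> g x i}"
        and XL: "\<And>j. j < n \<Longrightarrow> (\<lambda>k. X k j) \<longlonglongrightarrow> L j"
        and L: "L \<in> {x. (\<forall>i<n. 0 \<le> x i \<and> x i \<le> 1) \<and> (\<forall>i. n \<le> i \<longrightarrow> x i = 0)}"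
      have LQ: "L \<in> Q" using L by (simp add: Q_def)
      have "L i \<le> g L i"
        using LIMSEQ_le[OF XL[OF i] g_cont[of X L i, OF XL LQ]] X by auto
      then show "L \<in> {x. x i \<le> g x i}" by simp
    next
      fix i and X :: "nat \<Rightarrow> nat \<Rightarrow> real" and L :: "nat \<Rightarrow> real" assume i: "i < n"
        and X: "\<And>k. X k \<in> {x. (\<forall>i<n. 0 \<le> x i \<and> x i \<le> 1) \<and> (\<forall>i. n \<le> i \<longrightarrow> x i = 0)} \<inter> {x. g x i \<le> x i}"
        and XL: "\<And>j. j < n \<Longrightarrow> (\<lambda>k. X k j) \<longlonglongrightarrow> L j"
        and L: "L \<in> {x. (\<forall>i<n. 0 \<le> x i \<and> x i \<le> 1) \<and> (\<forall>i. n \<le> i \<longrightarrow> x i = 0)}"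
      have LQ: "L \<in> Q" using L by (simp add: Q_def)
      have "g L i \<le> L i"
        using LIMSEQ_le[OF g_cont[of X L i, OF XL LQ] XL[OF i]] X by auto
      then show "L \<in> {x. g x i \<le> x i}" by simp
    qed
    then show ?thesis using that by blast
  qed
  define l where "l = h x"
  have lD: "l \<in> \<Delta>" using h_in[OF xQ] by (simp add: l_def)
  have Spos: "0 < S l" using S_pos[OF lD] .
  have gx: "x i = \<beta> i l / S l" if "i < n" for i
    using fxp[OF that] that by (simp add: g_def l_def)
  have sumx: "(\<Sum>i<n. x i) = (\<Sum>i<n. \<beta> i l) / S l"
    using gx by (simp add: sum_divide_distrib)
  have Ssplit: "S l = (\<Sum>i<n. \<beta> i l) + \<beta> n l"
    by (simp add: S_def lessThan_Suc_atMost[symmetric])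
  have "(\<Sum>i<n. \<beta> i l) \<le> S l" using Ssplit b_nonneg[of n l] by simp
  then have sx1: "(\<Sum>i<n. x i) \<le> 1" using sumx Spos by (simp add: divide_le_eq)
  then have mx: "m x = 1" by (simp add: m_def)
  have lj: "l j = \<beta> j l / S l" if "j \<le> n" for j
  proof (cases "j < n")
    case True then show ?thesis using gx[OF True] mx by (simp add: l_def h_def)
  next
    case False
    then have jn: "j = n" using that by simp
    have "l j = 1 - (\<Sum>i<n. \<beta> i l) / S l" using jn mx sumx by (simp add: l_def h_def)
    also have "\<dots> = (S l - (\<Sum>i<n. \<beta> i l)) / S l" using Spos by (simp add: field_simps)
    also have "\<dots> = \<beta> j l / S l" using Ssplit jn by simp
    finally show ?thesis .
  qed
  obtain j where j: "j \<le> n" "0 < l j" "l \<in> C j" using kkm[OF lD] by blast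
  have "\<beta> j l = 0" using b_zero lD j(3) by blast
  then show False using lj[OF j(1)] j(2) by simp
qed


lemma tvs_tendsto_add:
  fixes f g :: "'c \<Rightarrow> 'a::real_tvs"
  assumes "(f \<longlongrightarrow> a) F" "(g \<longlongrightarrow> b) F"
  shows "((\<lambda>x. f x + g x) \<longlongrightarrow> a + b) F"
proof -
  have "filterlim (\<lambda>x. (f x, g x)) (nhds a \<times>\<^sub>F nhds b) F"
    using tendsto_Pair[OF assms] by (simp add: nhds_prod)
  from filterlim_compose[OF tvs_add_cont this] show ?thesis by simp
qed

lemma tvs_tendsto_scaleR:
  fixes f :: "'c \<Rightarrow> 'a::real_tvs" and c :: "'c \<Rightarrow> real"
  assumes "(c \<longlongrightarrow> c0) F" "(f \<longlongrightarrow> a) F"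
  shows "((\<lambda>x. c x *\<^sub>R f x) \<longlongrightarrow> c0 *\<^sub>R a) F"
proof -
  have "filterlim (\<lambda>x. (c x, f x)) (nhds c0 \<times>\<^sub>F nhds a) F"
    using tendsto_Pair[OF assms] by (simp add: nhds_prod)
  from filterlim_compose[OF tvs_scaleR_cont this] show ?thesis by simp
qed

lemma tvs_tendsto_sum:
  fixes f :: "'i \<Rightarrow> 'c \<Rightarrow> 'a::real_tvs"
  assumes "finite I" "\<And>i. i \<in> I \<Longrightarrow> (f i \<longlongrightarrow> a i) F"
  shows "((\<lambda>x. \<Sum>i\<in>I. f i x) \<longlongrightarrow> (\<Sum>i\<in>I. a i)) F"
  using assms
proof (induction I rule: finite_induct)
  case empty then show ?case by simp
next
  case (insert i I)
  then show ?case by (simp add: tvs_tendsto_add)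
qed

theorem theorem2p2:
  fixes D :: "'a::real_tvs set" and K :: "'k set"
    and F :: "'a \<Rightarrow> 'k \<Rightarrow> 'b::real_tvs set"
    and G :: "'a \<Rightarrow> 'a \<Rightarrow> 'b set"
  assumes "D \<noteq> {}" and "convex D" and "compact D" and "K \<noteq> {}"
    and "\<And>y. y \<in> K \<Longrightarrow> closedin (top_of_set D) {x \<in> D. 0 \<in> F x y}"
    and "KKM_type D G"
    and "\<And>y. y \<in> K \<Longrightarrow> \<exists>z\<in>D. \<forall>x\<in>D. 0 \<in> G z x \<longrightarrow> 0 \<in> F x y"
  shows "\<exists>xb\<in>D. \<forall>y\<in>K. 0 \<in> F xb y"
proof -
  note DnE = assms(1) and cvxD = assms(2) and cptD = assms(3) and kkmG = assms(6)
  obtain z where z: "\<And>y. y \<in> K \<Longrightarrow> z y \<in> D \<and> (\<forall>x\<in>D. 0 \<in> G (z y) x \<longrightarrow> 0 \<in> F x y)"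
    using assms(7) by metis
  obtain T where T: "\<And>y. y \<in> K \<Longrightarrow> closed (T y) \<and> {x \<in> D. 0 \<in> F x y} = D \<inter> T y"
    using assms(5) unfolding closedin_closed by metis
  have "D \<inter> \<Inter>(T ` K) \<noteq> {}"
  proof (rule compact_imp_fip[OF cptD])
    show "\<And>S. S \<in> T ` K \<Longrightarrow> closed S" using T by blast
    fix F' assume F': "finite F'" "F' \<subseteq> T ` K"
    then obtain K' where K': "K' \<subseteq> K" "finite K'" "F' = T ` K'"
      by (metis finite_subset_image)
    show "D \<inter> \<Inter>F' \<noteq> {}"
    proof (cases "K' = {}")
      case True then show ?thesis using K' DnE by simp
    next
      case False
      define n where "n = card K' - 1"
      have cK: "card K' = Suc n" using False K'(2) by (simp add: n_def card_gt_0_iff)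
      obtain e where e: "bij_betw e {0..<card K'} K'" using ex_bij_betw_nat_finite[OF K'(2)] by blast
      have eset: "{0..<card K'} = {..n}" using cK by auto
      have e': "bij_betw e {..n} K'" using e eset by simp
      have eK: "e j \<in> K" if "j \<le> n" for j using e' K'(1) that by (auto simp: bij_betw_def)
      have eimg: "e ` {..n} = K'" using e' by (simp add: bij_betw_def)
      define w where "w j = z (e j)" for j
      have wD: "w j \<in> D" if "j \<le> n" for j using z[OF eK[OF that]] by (simp add: w_def)
      define gm where "gm l = (\<Sum>j\<le>n. l j *\<^sub>R w j)" for l :: "nat \<Rightarrow> real"
      define \<Delta> where "\<Delta> = {l::nat\<Rightarrow>real. (\<forall>j\<le>n. 0 \<le> l j) \<and> (\<forall>j. n < j \<longrightarrow> l j = 0) \<and> sum l {..n} = 1}"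
      have gmD: "gm l \<in> D" if "l \<in> \<Delta>" for l
        unfolding gm_def using that wD by (intro convex_sum[OF _ cvxD]) (auto simp: \<Delta>_def)
      define C where "C j = {l. gm l \<in> T (e j)}" for j
      have "\<exists>l\<in>\<Delta>. \<forall>j\<le>n. l \<in> C j"
        unfolding \<Delta>_def
      proof (rule KKM_nat)
        fix j and X :: "nat \<Rightarrow> nat \<Rightarrow> real" and L :: "nat \<Rightarrow> real"
        assume j: "j \<le> n"
          and X: "\<And>k. X k \<in> {l. (\<forall>j\<le>n. 0 \<le> l j) \<and> (\<forall>j. n < j \<longrightarrow> l j = 0) \<and> sum l {..n} = 1} \<inter> C j"
          and XL: "\<And>i. i \<le> n \<Longrightarrow> (\<lambda>k. X k i) \<longlonglongrightarrow> L i"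
        have "(\<lambda>k. gm (X k)) \<longlonglongrightarrow> gm L"
          unfolding gm_def by (intro tvs_tendsto_sum tvs_tendsto_scaleR XL tendsto_const) auto
        moreover have "closed (T (e j))" using T[OF eK[OF j]] by blast
        ultimately have "gm L \<in> T (e j)"
          using X by (intro Lim_in_closed_set[of "T (e j)" "\<lambda>k. gm (X k)"]) (auto simp: C_def)
        then show "L \<in> C j" by (simp add: C_def)
      next
        fix l :: "nat \<Rightarrow> real" assume l: "l \<in> {l. (\<forall>j\<le>n. 0 \<le> l j) \<and> (\<forall>j. n < j \<longrightarrow> l j = 0) \<and> sum l {..n} = 1}"
        then have lD: "l \<in> \<Delta>" by (simp add: \<Delta>_def)
        define J where "J = {j. j \<le> n \<and> 0 < l j}"
        have Jsub: "J \<subseteq> {..n}" by (auto simp: J_def)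
        have zero: "l j = 0" if "j \<in> {..n} - J" for j using that l by (auto simp: J_def)
        have s1: "sum l J = 1"
          using sum.mono_neutral_left[of "{..n}" J l] Jsub zero l by auto
        have gmJ: "gm l = (\<Sum>j\<in>J. l j *\<^sub>R w j)"
          unfolding gm_def by (rule sum.mono_neutral_right) (use zero Jsub in auto)
        have "gm l \<in> convex hull (w ` J)"
          unfolding gmJ
          by (rule convex_sum) (use s1 in \<open>auto simp: J_def intro: hull_inc\<close>)
        moreover have "finite (w ` J)" "w ` J \<subseteq> D" using Jsub wD by (auto simp: J_def)
        ultimately obtain a where a: "a \<in> w ` J" "0 \<in> G a (gm l)"
          using kkmG gmD[OF lD] unfolding KKM_type_def by blast
        then obtain j where j: "j \<in> J" "a = w j" by blast
        have jn: "j \<le> n" using j by (simp add: J_def)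
        have "0 \<in> F (gm l) (e j)" using z[OF eK[OF jn]] gmD[OF lD] a j by (simp add: w_def)
        then have "gm l \<in> T (e j)" using T[OF eK[OF jn]] gmD[OF lD] by blast
        then show "\<exists>j\<le>n. 0 < l j \<and> l \<in> C j" using j jn by (auto simp: C_def J_def)
      qed
      then obtain l where l: "l \<in> \<Delta>" "\<And>j. j \<le> n \<Longrightarrow> gm l \<in> T (e j)" by (auto simp: C_def)
      have "gm l \<in> D \<inter> \<Inter>F'" using gmD[OF l(1)] l(2) K'(3) eimg[symmetric] by auto
      then show ?thesis by blast
    qed
  qed
  then obtain x where x: "x \<in> D" "\<And>y. y \<in> K \<Longrightarrow> x \<in> T y" by blast
  show ?thesis
  proof (intro bexI[OF _ x(1)] ballI)
    fix y assume "y \<in> K"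
    then have "x \<in> {x \<in> D. 0 \<in> F x y}" using T x by blast
    then show "0 \<in> F x y" by simp
  qed
qed

end
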